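(* Let $R$ be a commutative ring in which $2$ is invertible, let $Q$ be a quadratic space over $R$, and let $M=Q\perp\mathbb{H}(R)$. Then the DSER elementary orthogonal group coincides with the elementary orthogonal transvection group: $\mathrm{EO}_R(Q,\mathbb{H}(R))=\mathrm{ETransO}(M)$.
   Context: A quadratic $R$-module $(Q,q)$ is a finitely generated projective $R$-module with a quadratic form $q$; its bilinear form is $\langle x,y\rangle=q(x+y)-q(x)-q(y)$ (so $\langle x,x\rangle=2q(x)$). It is a quadratic space if $z\mapsto\langle z,-\rangle$ is an isomorphism $Q\to Q^*=\mathrm{Hom}_R(Q,R)$. For a finitely generated projective $P$, the hyperbolic space $\mathbb{H}(P)=P\oplus P^*$ carries $q(x,f)=f(x)$, i.e. $\langle(x_1,f_1),(x_2,f_2)\rangle=f_2(x_1)+f_1(x_2)$; orthogonal sums carry the sum of the forms. Here $P=R$ and $\mathbb{H}(R)$ has basis $x,f$ with $f(x)=1$. DSER transformations on $Q\perp\mathbb{H}(P)$: for $R$-linear $\alpha:Q\to P$, let $\alpha^*:P^*\to Q$ be determined by $\langle\alpha^*(g),z\rangle=g(\alpha(z))$ for all $z\in Q$, and set $E_\alpha(z,y,g)=(z-\alpha^*(g),\,y+\alpha(z)-\tfrac12\alpha\alpha^*(g),\,g)$. For $R$-linear $\beta:Q\to P^*$, let $\beta^*:P\to Q$ be determined by $\langle\beta^*(y),z\rangle=\beta(z)(y)$, and set $E^*_\beta(z,y,g)=(z-\beta^*(y),\,y,\,g+\beta(z)-\tfrac12\beta\beta^*(y))$. $\mathrm{EO}_R(Q,\mathbb{H}(P))$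 is the group generated by all $E_\alpha$, $E^*_\beta$. Elementary orthogonal transvections on $M=Q\perp\mathbb{H}(R)$: for $w\in Q$, writing elements as $(z,ax+bf)$ with $a,b\in R$, set $E^w_1(z,ax+bf)=(z-bw,\,(a+\langle z,w\rangle-bq(w))x+bf)$ and $E^w_2(z,ax+bf)=(z-aw,\,ax+(b+\langle z,w\rangle-aq(w))f)$. $\mathrm{ETransO}(M)$ is the group generated by all $E^w_1,E^w_2$, $w\in Q$. *)

theory Defs
  imports Main "HOL-Algebra.Bij" "HOL-Algebra.Generated_Groups"
begin

definition is_module :: "('r::comm_ring_1 \<Rightarrow> 'q::ab_group_add \<Rightarrow> 'q) \<Rightarrow> bool" where
  "is_module sc \<longleftrightarrow>
     (\<forall>a x y. sc a (x + y) = sc a x + sc a y) \<and>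
     (\<forall>a b x. sc (a + b) x = sc a x + sc b x) \<and>
     (\<forall>a b x. sc (a * b) x = sc a (sc b x)) \<and>
     (\<forall>x. sc 1 x = x)"

definition lin_fun :: "('r::comm_ring_1 \<Rightarrow> 'q::ab_group_add \<Rightarrow> 'q) \<Rightarrow> ('q \<Rightarrow> 'r) \<Rightarrow> bool" where
  "lin_fun sc f \<longleftrightarrow> (\<forall>x y. f (x + y) = f x + f y) \<and> (\<forall>a x. f (sc a x) = a * f x)"

text \<open>Finitely generated projective: Q is a retract of R^n, i.e. (dual basis) there are
  e_0..e_{n-1} in Q and linear functionals phi_k with x = sum_k phi_k(x) e_k.\<close>
definition fg_projective :: "('r::comm_ring_1 \<Rightarrow> 'q::ab_group_add \<Rightarrow> 'q) \<Rightarrow> bool" where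
  "fg_projective sc \<longleftrightarrow>
     (\<exists>(n::nat) (e::nat \<Rightarrow> 'q) (\<phi>::nat \<Rightarrow> 'q \<Rightarrow> 'r).
        (\<forall>k<n. lin_fun sc (\<phi> k)) \<and> (\<forall>x. x = (\<Sum>k<n. sc (\<phi> k x) (e k))))"

definition bil :: "('q::ab_group_add \<Rightarrow> 'r::comm_ring_1) \<Rightarrow> 'q \<Rightarrow> 'q \<Rightarrow> 'r" where
  "bil q x y = q (x + y) - q x - q y"

definition quadratic_form :: "('r::comm_ring_1 \<Rightarrow> 'q::ab_group_add \<Rightarrow> 'q) \<Rightarrow> ('q \<Rightarrow> 'r) \<Rightarrow> bool" where
  "quadratic_form sc q \<longleftrightarrow> (\<forall>a x. q (sc a x) = a^2 * q x) \<and> (\<forall>x. lin_fun sc (bil q x))"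

definition quadratic_space :: "('r::comm_ring_1 \<Rightarrow> 'q::ab_group_add \<Rightarrow> 'q) \<Rightarrow> ('q \<Rightarrow> 'r) \<Rightarrow> bool" where
  "quadratic_space sc q \<longleftrightarrow> is_module sc \<and> fg_projective sc \<and> quadratic_form sc q \<and>
     (\<forall>f. lin_fun sc f \<longrightarrow> (\<exists>!z. \<forall>y. bil q z y = f y))"

definition half :: "'r::comm_ring_1" where
  "half = (THE h. 2 * h = 1)"

text \<open>Elements of M = Q \<perp> H(R) are triples (z, a, b) standing for (z, a x + b f);
  an element g of P^* = Hom(R,R) is identified with g(1) \<in> R.
  adj q \<alpha> c is the unique w with \<langle>w, z\<rangle> = c * \<alpha> z for all z; this is \<alpha>^*(g) for
  \<alpha> : Q \<rightarrow> P, g = c, and also \<beta>^*(y) for \<beta> : Q \<rightarrow> P^*, y = c.\<close>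
definition adj :: "('q::ab_group_add \<Rightarrow> 'r::comm_ring_1) \<Rightarrow> ('q \<Rightarrow> 'r) \<Rightarrow> 'r \<Rightarrow> 'q" where
  "adj q \<alpha> c = (THE w. \<forall>z. bil q w z = c * \<alpha> z)"

definition E_alpha :: "('q::ab_group_add \<Rightarrow> 'r::comm_ring_1) \<Rightarrow> ('q \<Rightarrow> 'r) \<Rightarrow> 'q \<times> 'r \<times> 'r \<Rightarrow> 'q \<times> 'r \<times> 'r" where
  "E_alpha q \<alpha> = (\<lambda>(z, y, g). (z - adj q \<alpha> g, y + \<alpha> z - half * \<alpha> (adj q \<alpha> g), g))"

definition E_beta :: "('q::ab_group_add \<Rightarrow> 'r::comm_ring_1) \<Rightarrow> ('q \<Rightarrow> 'r) \<Rightarrow> 'q \<times> 'r \<times> 'r \<Rightarrow> 'q \<times> 'r \<times> 'r" where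
  "E_beta q \<beta> = (\<lambda>(z, y, g). (z - adj q \<beta> y, y, g + \<beta> z - half * \<beta> (adj q \<beta> y)))"

definition E1 :: "('r::comm_ring_1 \<Rightarrow> 'q::ab_group_add \<Rightarrow> 'q) \<Rightarrow> ('q \<Rightarrow> 'r) \<Rightarrow> 'q \<Rightarrow> 'q \<times> 'r \<times> 'r \<Rightarrow> 'q \<times> 'r \<times> 'r" where
  "E1 sc q w = (\<lambda>(z, a, b). (z - sc b w, a + bil q z w - b * q w, b))"

definition E2 :: "('r::comm_ring_1 \<Rightarrow> 'q::ab_group_add \<Rightarrow> 'q) \<Rightarrow> ('q \<Rightarrow> 'r) \<Rightarrow> 'q \<Rightarrow> 'q \<times> 'r \<times> 'r \<Rightarrow> 'q \<times> 'r \<times> 'r" where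
  "E2 sc q w = (\<lambda>(z, a, b). (z - sc a w, a, b + bil q z w - a * q w))"

definition EO :: "('r::comm_ring_1 \<Rightarrow> 'q::ab_group_add \<Rightarrow> 'q) \<Rightarrow> ('q \<Rightarrow> 'r) \<Rightarrow> ('q \<times> 'r \<times> 'r \<Rightarrow> 'q \<times> 'r \<times> 'r) set" where
  "EO sc q = generate (BijGroup UNIV)
     ({E_alpha q \<alpha> | \<alpha>. lin_fun sc \<alpha>} \<union> {E_beta q \<beta> | \<beta>. lin_fun sc \<beta>})"

definition ETransO :: "('r::comm_ring_1 \<Rightarrow> 'q::ab_group_add \<Rightarrow> 'q) \<Rightarrow> ('q \<Rightarrow> 'r) \<Rightarrow> ('q \<times> 'r \<times> 'r \<Rightarrow> 'q \<times> 'r \<times> 'r) set" where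
  "ETransO sc q = generate (BijGroup UNIV) (range (E1 sc q) \<union> range (E2 sc q))"

end

theory Submission
  imports Defs
begin

lemma half_prop:
  assumes "(2::'r::comm_ring_1) dvd 1"
  shows "2 * (half::'r) = 1"
proof -
  obtain k :: 'r where k: "1 = 2 * k" using assms by (auto elim: dvdE)
  have ex: "\<exists>!h::'r. 2 * h = 1"
  proof
    show "2 * k = 1" using k by simp
  next
    fix h :: 'r assume h: "2 * h = 1"
    have "h = h * (2 * k)" using k by simp
    also have "\<dots> = (2 * h) * k" by (simp add: algebra_simps)
    finally show "h = k" using h by simp
  qed
  show ?thesis unfolding half_def using theI'[OF ex] .
qed

lemma bil_sym: "bil q x y = bil q y x"
  unfolding bil_def by (simp add: algebra_simps)

context
  fixes sc :: "'r::comm_ring_1 \<Rightarrow> 'q::ab_group_add \<Rightarrow> 'q" and q :: "'q \<Rightarrow> 'r"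
  assumes two: "(2::'r) dvd 1" and qs: "quadratic_space sc q"
begin

lemma modl: "is_module sc" using qs unfolding quadratic_space_def by auto
lemma qf: "quadratic_form sc q" using qs unfolding quadratic_space_def by auto

lemma bil_lin2: "lin_fun sc (bil q x)" using qf unfolding quadratic_form_def by auto

lemma bil_sc1: "bil q (sc c w) z = c * bil q w z"
  using bil_lin2[of z] unfolding lin_fun_def by (simp add: bil_sym)

lemma bil_self: "bil q w w = 2 * q w"
proof -
  have "sc 2 w = w + w" using modl unfolding is_module_def
  proof -
    have "sc (1 + 1) w = sc 1 w + sc 1 w" using modl unfolding is_module_def by blast
    moreover have "sc 1 w = w" using modl unfolding is_module_def by blast
    ultimately show ?thesis by (simp add: one_add_one)
  qed
  then have "q (w + w) = 4 * q w" using qf unfolding quadratic_form_def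
  proof -
    have "q (sc 2 w) = 2^2 * q w" using qf unfolding quadratic_form_def by blast
    then show ?thesis using \<open>sc 2 w = w + w\<close> by simp
  qed
  then show ?thesis unfolding bil_def by (simp add: algebra_simps)
qed

lemma half_self: "half * bil q w w = q w"
proof -
  have "half * bil q w w = (2*half) * q w" by (simp add: bil_self algebra_simps)
  then show ?thesis using half_prop[OF two] by simp
qed

lemma adj_eq:
  assumes lin: "lin_fun sc \<alpha>" and w: "\<forall>z. bil q w z = \<alpha> z"
  shows "adj q \<alpha> c = sc c w"
proof -
  have l: "lin_fun sc (\<lambda>z. c * \<alpha> z)" using lin unfolding lin_fun_def
    by (simp add: algebra_simps)
  then have u: "\<exists>!v. \<forall>y. bil q v y = c * \<alpha> y" using qs unfolding quadratic_space_def by blast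
  have "\<forall>z. bil q (sc c w) z = c * \<alpha> z" using w by (simp add: bil_sc1)
  then show ?thesis unfolding adj_def using u by (rule the1_equality[rotated])
qed

lemma Ealpha_E1:
  assumes lin: "lin_fun sc \<alpha>" and w: "\<forall>z. bil q w z = \<alpha> z"
  shows "E_alpha q \<alpha> = E1 sc q w"
proof -
  have a: "\<alpha> = bil q w" using w by auto
  show ?thesis
  proof (rule ext, clarify)
    fix z :: 'q and a b :: 'r
    have s2: "\<And>c. bil q w (sc c w) = c * bil q w w" using bil_lin2[of w] unfolding lin_fun_def by blast
    have "half * (c * bil q w w) = c * q w" for c using half_self[of w] by (metis mult.left_commute)
    then show "E_alpha q \<alpha> (z, a, b) = E1 sc q w (z, a, b)"
      unfolding E_alpha_def E1_def using adj_eq[OF lin w] a s2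
      by (simp add: bil_sym[of q z w])
  qed
qed

lemma Ebeta_E2:
  assumes lin: "lin_fun sc \<alpha>" and w: "\<forall>z. bil q w z = \<alpha> z"
  shows "E_beta q \<alpha> = E2 sc q w"
proof -
  have a: "\<alpha> = bil q w" using w by auto
  show ?thesis
  proof (rule ext, clarify)
    fix z :: 'q and a b :: 'r
    have s2: "\<And>c. bil q w (sc c w) = c * bil q w w" using bil_lin2[of w] unfolding lin_fun_def by blast
    have "half * (c * bil q w w) = c * q w" for c using half_self[of w] by (metis mult.left_commute)
    then show "E_beta q \<alpha> (z, a, b) = E2 sc q w (z, a, b)"
      unfolding E_beta_def E2_def using adj_eq[OF lin w] a s2
      by (simp add: bil_sym[of q z w])
  qed
qed

lemma riesz: "lin_fun sc \<alpha> \<Longrightarrow> \<exists>w. \<forall>z. bil q w z = \<alpha> z"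
  using qs unfolding quadratic_space_def by blast

lemma gen1: "{E_alpha q \<alpha> | \<alpha>. lin_fun sc \<alpha>} = range (E1 sc q)"
proof
  show "{E_alpha q \<alpha> | \<alpha>. lin_fun sc \<alpha>} \<subseteq> range (E1 sc q)"
  proof
    fix f assume "f \<in> {E_alpha q \<alpha> | \<alpha>. lin_fun sc \<alpha>}"
    then obtain \<alpha> where f: "f = E_alpha q \<alpha>" and l: "lin_fun sc \<alpha>" by blast
    obtain w where "\<forall>z. bil q w z = \<alpha> z" using riesz[OF l] by blast
    then have "f = E1 sc q w" using Ealpha_E1[OF l] f by simp
    then show "f \<in> range (E1 sc q)" by simp
  qed
  show "range (E1 sc q) \<subseteq> {E_alpha q \<alpha> | \<alpha>. lin_fun sc \<alpha>}"
  proof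
    fix f assume "f \<in> range (E1 sc q)"
    then obtain w where f: "f = E1 sc q w" by auto
    have "E_alpha q (bil q w) = E1 sc q w" by (rule Ealpha_E1[OF bil_lin2]) simp
    then have "f = E_alpha q (bil q w) \<and> lin_fun sc (bil q w)" using f bil_lin2 by simp
    then show "f \<in> {E_alpha q \<alpha> | \<alpha>. lin_fun sc \<alpha>}" by blast
  qed
qed

lemma gen2: "{E_beta q \<alpha> | \<alpha>. lin_fun sc \<alpha>} = range (E2 sc q)"
proof
  show "{E_beta q \<alpha> | \<alpha>. lin_fun sc \<alpha>} \<subseteq> range (E2 sc q)"
  proof
    fix f assume "f \<in> {E_beta q \<alpha> | \<alpha>. lin_fun sc \<alpha>}"
    then obtain \<alpha> where f: "f = E_beta q \<alpha>" and l: "lin_fun sc \<alpha>" by blast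
    obtain w where "\<forall>z. bil q w z = \<alpha> z" using riesz[OF l] by blast
    then have "f = E2 sc q w" using Ebeta_E2[OF l] f by simp
    then show "f \<in> range (E2 sc q)" by simp
  qed
  show "range (E2 sc q) \<subseteq> {E_beta q \<alpha> | \<alpha>. lin_fun sc \<alpha>}"
  proof
    fix f assume "f \<in> range (E2 sc q)"
    then obtain w where f: "f = E2 sc q w" by auto
    have "E_beta q (bil q w) = E2 sc q w" by (rule Ebeta_E2[OF bil_lin2]) simp
    then have "f = E_beta q (bil q w) \<and> lin_fun sc (bil q w)" using f bil_lin2 by simp
    then show "f \<in> {E_beta q \<alpha> | \<alpha>. lin_fun sc \<alpha>}" by blast
  qed
qed

end

theorem mainTheorem1:
  fixes sc :: "'r::comm_ring_1 \<Rightarrow> 'q::ab_group_add \<Rightarrow> 'q" and q :: "'q \<Rightarrow> 'r"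
  assumes "(2::'r) dvd 1"
    and "quadratic_space sc q"
  shows "EO sc q = ETransO sc q"
  unfolding EO_def ETransO_def gen1[OF assms] gen2[OF assms] ..

end
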